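(* For each $i\in\{1,2,3,4\}$ and any right-hand side, GMRES applied (in exact arithmetic) to the preconditioned system $\mathcal{M}_i^{-1}\mathcal{A}\mathbf{x}=\mathcal{M}_i^{-1}\tilde b$ terminates with the exact solution in at most $n+q+1$ iterations.
   Context: Let $A_1\in\mathbb{R}^{p\times n}$ have full column rank and $A_2\in\mathbb{R}^{q\times n}$; let $b_1\in\mathbb{R}^p$, $b_2\in\mathbb{R}^q$. Set $P=A_1^TA_1$, assume $P-A_2^TA_2$ is symmetric positive definite (so $\mathcal{A}$ below is nonsingular), and let $\hat P\in\mathbb{R}^{n\times n}$ be symmetric positive definite. Define $\mathcal{A}=\begin{pmatrix}I_p&A_1&0\\0&P&A_2^T\\0&A_2&I_q\end{pmatrix}$, $\tilde b=(b_1;A_1^Tb_1;b_2)$, $\mathcal{M}_1=\begin{pmatrix}I_p&0&0\\0&\hat P&0\\0&0&I_q\end{pmatrix}$, $\mathcal{M}_2=\begin{pmatrix}I_p&0&0\\0&\hat P&A_2^T\\0&0&I_q\end{pmatrix}$, $\mathcal{M}_3=\begin{pmatrix}I_p&A_1&0\\0&\hat P&0\\0&0&I_q\end{pmatrix}$, $\mathcal{M}_4=\begin{pmatrix}I_p&A_1&0\\0&\hat P&A_2^T\\0&0&I_q\end{pmatrix}$. *)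

theory Defs
  imports "HOL-Analysis.Analysis"
begin

definition spd :: "real^'n^'n \<Rightarrow> bool" where
  "spd M \<longleftrightarrow> transpose M = M \<and> (\<forall>x. x \<noteq> 0 \<longrightarrow> x \<bullet> (M *v x) > 0)"

definition block3 ::
  "real^'p^'p \<Rightarrow> real^'n^'p \<Rightarrow> real^'q^'p \<Rightarrow>
   real^'p^'n \<Rightarrow> real^'n^'n \<Rightarrow> real^'q^'n \<Rightarrow>
   real^'p^'q \<Rightarrow> real^'n^'q \<Rightarrow> real^'q^'q \<Rightarrow> real^('p + ('n + 'q))^('p + ('n + 'q))" where
  "block3 B11 B12 B13 B21 B22 B23 B31 B32 B33 =
    (\<chi> i j. case i of
       Inl a \<Rightarrow> (case j of Inl b \<Rightarrow> B11$a$b | Inr (Inl b) \<Rightarrow> B12$a$b | Inr (Inr b) \<Rightarrow> B13$a$b)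
     | Inr (Inl a) \<Rightarrow> (case j of Inl b \<Rightarrow> B21$a$b | Inr (Inl b) \<Rightarrow> B22$a$b | Inr (Inr b) \<Rightarrow> B23$a$b)
     | Inr (Inr a) \<Rightarrow> (case j of Inl b \<Rightarrow> B31$a$b | Inr (Inl b) \<Rightarrow> B32$a$b | Inr (Inr b) \<Rightarrow> B33$a$b))"

definition bvec3 :: "real^'p \<Rightarrow> real^'n \<Rightarrow> real^'q \<Rightarrow> real^('p + ('n + 'q))" where
  "bvec3 u v w = (\<chi> i. case i of Inl a \<Rightarrow> u$a | Inr (Inl a) \<Rightarrow> v$a | Inr (Inr a) \<Rightarrow> w$a)"

text \<open>The matrices of the paper (P = A1^T A1).\<close>
definition calA :: "real^'n^'p \<Rightarrow> real^'n^'q \<Rightarrow> real^('p + ('n + 'q))^('p + ('n + 'q))" where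
  "calA A1 A2 = block3 (mat 1) A1 0  0 (transpose A1 ** A1) (transpose A2)  0 A2 (mat 1)"

definition btilde :: "real^'n^'p \<Rightarrow> real^'p \<Rightarrow> real^'q \<Rightarrow> real^('p + ('n + 'q))" where
  "btilde A1 b1 b2 = bvec3 b1 (transpose A1 *v b1) b2"

definition calM1 :: "real^'n^'n \<Rightarrow> real^('p::finite + ('n + 'q::finite))^('p + ('n + 'q))" where
  "calM1 Ph = block3 (mat 1) 0 0  0 Ph 0  0 0 (mat 1)"

definition calM2 :: "real^'n^'q \<Rightarrow> real^'n^'n \<Rightarrow> real^('p::finite + ('n + 'q))^('p + ('n + 'q))" where
  "calM2 A2 Ph = block3 (mat 1) 0 0  0 Ph (transpose A2)  0 0 (mat 1)"

definition calM3 :: "real^'n^'p \<Rightarrow> real^'n^'n \<Rightarrow> real^('p + ('n + 'q::finite))^('p + ('n + 'q))" where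
  "calM3 A1 Ph = block3 (mat 1) A1 0  0 Ph 0  0 0 (mat 1)"

definition calM4 :: "real^'n^'p \<Rightarrow> real^'n^'q \<Rightarrow> real^'n^'n \<Rightarrow> real^('p + ('n + 'q))^('p + ('n + 'q))" where
  "calM4 A1 A2 Ph = block3 (mat 1) A1 0  0 Ph (transpose A2)  0 0 (mat 1)"

definition krylov :: "real^'m^'m \<Rightarrow> real^'m \<Rightarrow> nat \<Rightarrow> (real^'m) set" where
  "krylov B r k = span {((\<lambda>v. B *v v) ^^ j) r | j. j < k}"

definition gmres_iterate :: "real^'m^'m \<Rightarrow> real^'m \<Rightarrow> real^'m \<Rightarrow> nat \<Rightarrow> real^'m" where
  "gmres_iterate B c x0 k =
    (SOME x. x \<in> (\<lambda>v. x0 + v) ` krylov B (c - B *v x0) k \<and>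
       (\<forall>y \<in> (\<lambda>v. x0 + v) ` krylov B (c - B *v x0) k. norm (c - B *v x) \<le> norm (c - B *v y)))"

definition gmres_exact_within :: "real^'m^'m \<Rightarrow> real^'m \<Rightarrow> real^'m \<Rightarrow> nat \<Rightarrow> bool" where
  "gmres_exact_within B c x0 N \<longleftrightarrow> (\<exists>k \<le> N. B *v gmres_iterate B c x0 k = c)"

end

theory Submission
  imports Defs
begin

lemma pow_mv_diff:
  fixes B :: "real^'m^'m"
  shows "((\<lambda>v. B *v v) ^^ j) (a - b) = ((\<lambda>v. B *v v) ^^ j) a - ((\<lambda>v. B *v v) ^^ j) b"
  by (induction j) (auto simp: matrix_vector_mult_diff_distrib)

lemma gmres_gen:
  fixes B :: "real^'m^'m"
  assumes inv: "invertible B" and sW: "subspace W" and dW: "dim W \<le> r"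
    and BW: "\<And>x. B *v x - x \<in> W"
  shows "gmres_exact_within B c x0 (Suc r)"
proof -
  define f where "f = (\<lambda>v. B *v v)"
  define r0 where "r0 = c - B *v x0"
  define w where "w = B *v r0 - r0"
  define G where "G k = {(f^^j) w | j. j < k}" for k
  have lin: "linear f" unfolding f_def by (rule matrix_vector_mul_linear)
  obtain B' where B': "B' ** B = mat 1" using inv invertible_left_inverse by blast
  have injf: "inj f"
  proof (rule injI)
    fix x y assume "f x = f y"
    hence "B' *v (B *v x) = B' *v (B *v y)" by (simp add: f_def)
    thus "x = y" by (simp add: matrix_vector_mul_assoc B')
  qed
  have fW: "f y \<in> W" if "y \<in> W" for y
  proof -
    have "f y = y + (B *v y - y)" by (simp add: f_def)
    thus ?thesis using BW[of y] that sW subspace_add by metis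
  qed
  have GW: "(f^^j) w \<in> W" for j
    by (induction j) (auto simp: w_def BW fW)
  hence GkW: "G k \<subseteq> W" for k unfolding G_def by auto
  have mono: "G k \<subseteq> G (Suc k)" for k unfolding G_def by auto
  have "\<exists>k \<le> r. span (G (Suc k)) = span (G k)"
  proof (rule ccontr)
    assume H: "\<not> ?thesis"
    have "k \<le> Suc r \<Longrightarrow> k \<le> dim (G k)" for k
    proof (induction k)
      case 0 then show ?case by simp
    next
      case (Suc k)
      have "\<not> dim (G (Suc k)) \<le> dim (G k)"
      proof
        assume "dim (G (Suc k)) \<le> dim (G k)"
        hence "span (G k) = span (G (Suc k))" using dim_eq_span[OF mono] by blast
        thus False using H Suc.prems by force
      qed
      thus ?case using Suc by linarith
    qed
    hence "Suc r \<le> dim (G (Suc r))" by simp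
    moreover have "dim (G (Suc r)) \<le> dim W" using GkW by (rule dim_subset)
    ultimately show False using dW by linarith
  qed
  then obtain k where kr: "k \<le> r" and keq: "span (G (Suc k)) = span (G k)" by blast
  have fG: "f ` G k \<subseteq> G (Suc k)" unfolding G_def by auto (metis comp_apply funpow.simps(2) not_less_eq)
  have img: "f ` span (G k) = span (f ` G k)" using span_linear_image[OF lin] by simp
  have sub: "f ` span (G k) \<subseteq> span (G k)"
    using img fG keq span_mono by (metis)
  have deq: "dim (f ` span (G k)) = dim (span (G k))"
    using dim_image_eq[OF lin] injf by (metis dim_span inj_on_subset subset_UNIV)
  have "span (f ` span (G k)) = span (span (G k))"
    using dim_eq_span[OF sub] deq by simp
  hence surjU: "f ` span (G k) = span (G k)" using img by (simp add: span_span)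
  have "w \<in> span (G k)" using keq unfolding G_def by (metis (mono_tags, lifting) CollectI funpow_0 span_base zero_less_Suc)
  then obtain u where u: "u \<in> span (G k)" "w = f u" using surjU by (metis imageE)
  define K where "K = krylov B r0 (Suc k)"
  have fK: "(f^^j) r0 \<in> K" if "j < Suc k" for j
    using that unfolding K_def krylov_def f_def by (intro span_base) blast
  have GK: "G k \<subseteq> K"
  proof
    fix v assume "v \<in> G k"
    then obtain j where j: "j < k" "v = (f^^j) w" unfolding G_def by blast
    have "v = (f^^Suc j) r0 - (f^^j) r0"
      using j pow_mv_diff[where B=B and j=j and a="B *v r0" and b=r0] unfolding f_def w_def by (simp add: funpow_swap1)
    thus "v \<in> K" using fK[of "Suc j"] fK[of j] j(1) span_diff unfolding K_def krylov_def by simp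
  qed
  have uK: "u \<in> K" using u(1) GK span_minimal[of "G k" K] unfolding K_def krylov_def
    by (auto simp: subspace_span)
  have r0K: "r0 \<in> K" using fK[of 0] by simp
  define x where "x = x0 + (r0 - u)"
  have dK: "r0 - u \<in> K" using uK r0K unfolding K_def krylov_def by (rule span_diff[rotated])
  have xin: "x \<in> (\<lambda>v. x0 + v) ` K" unfolding x_def using dK by (rule imageI)
  have Bu: "B *v u = B *v r0 - r0" using u(2) unfolding w_def f_def by simp
  have "B *v x = B *v x0 + B *v r0 - B *v u"
    unfolding x_def by (simp add: matrix_vector_right_distrib matrix_vector_mult_diff_distrib)
  also have "\<dots> = B *v x0 + r0" using Bu by simp
  also have "\<dots> = c" unfolding r0_def by simp
  finally have res: "c - B *v x = 0" by simp
  define P where "P = (\<lambda>x. x \<in> (\<lambda>v. x0 + v) ` K \<and>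
       (\<forall>y \<in> (\<lambda>v. x0 + v) ` K. norm (c - B *v x) \<le> norm (c - B *v y)))"
  have "P x" unfolding P_def using xin res by simp
  hence "P (SOME x. P x)" by (rule someI)
  hence "norm (c - B *v (SOME x. P x)) \<le> 0" unfolding P_def using xin res by force
  hence "B *v gmres_iterate B c x0 (Suc k) = c"
    unfolding gmres_iterate_def P_def K_def r0_def by simp
  thus ?thesis unfolding gmres_exact_within_def using kr by (intro exI[of _ "Suc k"]) simp
qed
lemma minv_left: "invertible (M::real^'m^'m) \<Longrightarrow> matrix_inv M ** M = mat 1"
  unfolding invertible_def matrix_inv_def by (rule someI2_ex) auto

lemma spd_inj: "spd M \<Longrightarrow> M *v x = 0 \<Longrightarrow> x = 0"
  unfolding spd_def by (metis inner_zero_right less_irrefl)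

lemma sum_UNIV_Plus: "sum f (UNIV :: ('a::finite + 'b::finite) set) = sum (\<lambda>a. f (Inl a)) UNIV + sum (\<lambda>b. f (Inr b)) UNIV"
  using sum.Plus[of "UNIV :: 'a set" "UNIV :: 'b set" f] by (simp add: o_def)

lemma block_mult:
  "block3 B11 B12 B13 B21 B22 B23 B31 B32 B33 *v x =
   bvec3 (B11 *v (\<chi> a. x$Inl a) + B12 *v (\<chi> a. x$Inr (Inl a)) + B13 *v (\<chi> a. x$Inr (Inr a)))
         (B21 *v (\<chi> a. x$Inl a) + B22 *v (\<chi> a. x$Inr (Inl a)) + B23 *v (\<chi> a. x$Inr (Inr a)))
         (B31 *v (\<chi> a. x$Inl a) + B32 *v (\<chi> a. x$Inr (Inl a)) + B33 *v (\<chi> a. x$Inr (Inr a)))"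
  unfolding vec_eq_iff
proof
  fix i
    show "(block3 B11 B12 B13 B21 B22 B23 B31 B32 B33 *v x) $ i = bvec3
          (B11 *v (\<chi> a. x$Inl a) + B12 *v (\<chi> a. x$Inr (Inl a)) + B13 *v (\<chi> a. x$Inr (Inr a)))
         (B21 *v (\<chi> a. x$Inl a) + B22 *v (\<chi> a. x$Inr (Inl a)) + B23 *v (\<chi> a. x$Inr (Inr a)))
         (B31 *v (\<chi> a. x$Inl a) + B32 *v (\<chi> a. x$Inr (Inl a)) + B33 *v (\<chi> a. x$Inr (Inr a))) $ i"
    unfolding matrix_vector_mult_def block3_def bvec3_def
    apply (simp add: sum_UNIV_Plus)
    apply (cases i rule: sum.exhaust)
     apply (auto split: sum.split)
    done
qed

lemma bvec3_eq0: "bvec3 u v w = 0 \<longleftrightarrow> u = 0 \<and> v = 0 \<and> w = 0"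
  unfolding bvec3_def vec_eq_iff by (auto split: sum.split)

lemma vec_split0: "(\<chi> a. x$Inl a) = 0 \<Longrightarrow> (\<chi> a. x$Inr (Inl a)) = 0 \<Longrightarrow> (\<chi> a. x$Inr (Inr a)) = 0 \<Longrightarrow> (x :: real^('p::finite + ('n::finite + 'q::finite))) = 0"
proof -
  assume a: "(\<chi> a. x$Inl a) = 0" "(\<chi> a. x$Inr (Inl a)) = 0" "(\<chi> a. x$Inr (Inr a)) = 0"
  have "x $ i = 0" for i
  proof (cases i)
    case (Inl a') then show ?thesis using a(1) by (simp add: vec_eq_iff)
  next
    case (Inr b) then show ?thesis using a(2,3) by (cases b) (simp_all add: vec_eq_iff)
  qed
  thus ?thesis by (simp add: vec_eq_iff)
qed


lemma minv_inv: "invertible (M::real^'m^'m) \<Longrightarrow> invertible (matrix_inv M)"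
  unfolding invertible_def matrix_inv_def by (rule someI2_ex) auto

lemma M_inv:
  fixes X :: "real^'n^'p" and Z :: "real^'q^'n" and Ph :: "real^'n^'n"
  assumes "spd Ph"
  shows "invertible (block3 (mat 1) X 0 0 Ph Z 0 0 (mat 1) :: real^('p::finite + ('n::finite + 'q::finite))^('p + ('n + 'q)))"
  unfolding invertible_left_inverse matrix_left_invertible_ker
proof (intro allI impI)
  fix x :: "real^('p + ('n + 'q))"
  assume "block3 (mat 1) X 0 0 Ph Z 0 0 (mat 1) *v x = 0"
  hence h0: "mat 1 *v (\<chi> a. x$Inl a) + X *v (\<chi> a. x$Inr (Inl a)) + 0 *v (\<chi> a. x$Inr (Inr a)) = 0 \<and>
    0 *v (\<chi> a. x$Inl a) + Ph *v (\<chi> a. x$Inr (Inl a)) + Z *v (\<chi> a. x$Inr (Inr a)) = 0 \<and>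
    0 *v (\<chi> a. x$Inl a) + 0 *v (\<chi> a. x$Inr (Inl a)) + mat 1 *v (\<chi> a. x$Inr (Inr a)) = 0"
    unfolding block_mult bvec3_eq0 .
  have h3: "(\<chi> a. x$Inr (Inr a)) = 0" using h0 by simp
  have h: "(\<chi> a. x$Inl a) + X *v (\<chi> a. x$Inr (Inl a)) = 0"
    "Ph *v (\<chi> a. x$Inr (Inl a)) = 0"
    "(\<chi> a. x$Inr (Inr a)) = 0"
    using h3 h0 by simp_all
  have "Ph *v (\<chi> a. x$Inr (Inl a)) = 0" using h(2) .
  hence m: "(\<chi> a. x$Inr (Inl a)) = 0" using spd_inj[OF assms] by blast
  have l: "(\<chi> a. x$Inl a) = 0" using h(1) m by simp
  show "x = 0" using vec_split0[OF l m h(3)] .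
qed

lemma A_inv:
  fixes A1 :: "real^'n^'p" and A2 :: "real^'n^'q"
  assumes "spd (transpose A1 ** A1 - transpose A2 ** A2)"
  shows "invertible (calA A1 A2 :: real^('p::finite + ('n::finite + 'q::finite))^('p + ('n + 'q)))"
  unfolding invertible_left_inverse matrix_left_invertible_ker
proof (intro allI impI)
  fix x :: "real^('p + ('n + 'q))"
  assume "calA A1 A2 *v x = 0"
  hence h0: "mat 1 *v (\<chi> a. x$Inl a) + A1 *v (\<chi> a. x$Inr (Inl a)) + 0 *v (\<chi> a. x$Inr (Inr a)) = 0 \<and>
    0 *v (\<chi> a. x$Inl a) + (transpose A1 ** A1) *v (\<chi> a. x$Inr (Inl a)) + transpose A2 *v (\<chi> a. x$Inr (Inr a)) = 0 \<and>
    0 *v (\<chi> a. x$Inl a) + A2 *v (\<chi> a. x$Inr (Inl a)) + mat 1 *v (\<chi> a. x$Inr (Inr a)) = 0"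
    unfolding calA_def block_mult bvec3_eq0 .
  have h: "(\<chi> a. x$Inl a) + A1 *v (\<chi> a. x$Inr (Inl a)) = 0"
    "(transpose A1 ** A1) *v (\<chi> a. x$Inr (Inl a)) + transpose A2 *v (\<chi> a. x$Inr (Inr a)) = 0"
    "A2 *v (\<chi> a. x$Inr (Inl a)) + (\<chi> a. x$Inr (Inr a)) = 0"
    using h0 by simp_all
  define xm where "xm = (\<chi> a. x$Inr (Inl a))"
  define xr where "xr = (\<chi> a. x$Inr (Inr a))"
  have r: "xr = - (A2 *v xm)" using h(3) unfolding xm_def xr_def by (simp add: eq_neg_iff_add_eq_0 add.commute)
  have "(transpose A1 ** A1 - transpose A2 ** A2) *v xm
        = (transpose A1 ** A1) *v xm + transpose A2 *v xr"
    unfolding r by (simp add: matrix_vector_mult_diff_rdistrib matrix_vector_mul_assoc[symmetric] matrix_vector_right_distrib[symmetric]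
       vec.neg)
  also have "\<dots> = 0" using h(2) unfolding xm_def xr_def .
  finally have m: "xm = 0" using spd_inj[OF assms] by blast
  have rr: "xr = 0" using r m by simp
  have l: "(\<chi> a. x$Inl a) = 0" using h(1) m unfolding xm_def by simp
  show "x = 0" using vec_split0[OF l m[unfolded xm_def] rr[unfolded xr_def]] .
qed

lemma col_Inl:
  "(block3 (mat 1) X Y 0 Z V 0 T S :: real^('p::finite + ('n::finite + 'q::finite))^('p + ('n + 'q)))
     *v axis (Inl a) 1 = axis (Inl a) 1"
  unfolding matrix_vector_mult_basis column_def block3_def vec_eq_iff
  by (auto simp: axis_def mat_def split: sum.split)

theorem corollary2:
  fixes A1 :: "real^'n^'p" and A2 :: "real^'n^'q" and Ph :: "real^'n^'n"
    and b1 :: "real^'p" and b2 :: "real^'q"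
  assumes "rank A1 = CARD('n)"
    and "spd (transpose A1 ** A1 - transpose A2 ** A2)"
    and "spd Ph"
  shows "\<forall>M \<in> {calM1 Ph :: real^('p + ('n + 'q))^('p + ('n + 'q)), calM2 A2 Ph, calM3 A1 Ph, calM4 A1 A2 Ph}.
           \<forall>x0. gmres_exact_within (matrix_inv M ** calA A1 A2) (matrix_inv M *v btilde A1 b1 b2) x0
                  (CARD('n) + CARD('q) + 1)"
proof (intro ballI allI)
  fix M :: "real^('p + ('n + 'q))^('p + ('n + 'q))" and x0
  assume "M \<in> {calM1 Ph :: real^('p + ('n + 'q))^('p + ('n + 'q)), calM2 A2 Ph, calM3 A1 Ph, calM4 A1 A2 Ph}"
  then obtain X :: "real^'n^'p" and Z :: "real^'q^'n" where MX: "M = block3 (mat 1) X 0 0 Ph Z 0 0 (mat 1)"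
    unfolding calM1_def calM2_def calM3_def calM4_def by blast
  have iM: "invertible M" unfolding MX by (rule M_inv[OF assms(3)])
  define B where "B = matrix_inv M ** calA A1 A2"
  have iB: "invertible B" unfolding B_def
    by (rule invertible_mult[OF minv_inv[OF iM] A_inv[OF assms(2)]])
  have colB: "B *v axis (Inl a) 1 = axis (Inl a) 1" for a
  proof -
    have "calA A1 A2 *v axis (Inl a) 1 = axis (Inl a) 1" unfolding calA_def by (rule col_Inl)
    moreover have "M *v axis (Inl a) 1 = axis (Inl a) 1" unfolding MX by (rule col_Inl)
    ultimately have "B *v axis (Inl a) 1 = matrix_inv M *v (M *v axis (Inl a) 1)"
      unfolding B_def by (simp add: matrix_vector_mul_assoc[symmetric])
    also have "\<dots> = axis (Inl a) 1" by (simp add: matrix_vector_mul_assoc minv_left[OF iM])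
    finally show ?thesis .
  qed
  define C where "C = B - mat 1"
  define W where "W = span ((\<lambda>j. C *v axis j 1) ` range Inr)"
  have sW: "subspace W" unfolding W_def by simp
  have "dim W \<le> card ((\<lambda>j. C *v axis j 1) ` range Inr)" unfolding W_def dim_span
    by (rule dim_le_card') simp
  also have "\<dots> \<le> card (range (Inr :: 'n + 'q \<Rightarrow> 'p + ('n + 'q)))" by (rule card_image_le) simp
  also have "\<dots> = CARD('n + 'q)" by (simp add: card_image)
  also have "\<dots> = CARD('n) + CARD('q)" by (simp add: card_sum)
  finally have dW: "dim W \<le> CARD('n) + CARD('q)" .
  have BW: "B *v x - x \<in> W" for x
  proof -
    have "B *v x - x = C *v x" unfolding C_def by (simp add: matrix_vector_mult_diff_rdistrib)
    also have "\<dots> = C *v (\<Sum>i\<in>UNIV. x$i *s axis i 1)" by (simp add: basis_expansion)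
    also have "\<dots> = (\<Sum>i\<in>UNIV. x$i *s (C *v axis i 1))"
      by (simp add: vec.sum vec.scale)
    also have "\<dots> \<in> W"
    proof (rule span_sum[of _ _ "(\<lambda>j. C *v axis j 1) ` range Inr", folded W_def])
      fix i :: "'p + ('n + 'q)"
      show "x $ i *s (C *v axis i 1) \<in> W"
      proof (cases i)
        case (Inl a)
        have "C *v axis i 1 = 0" unfolding C_def Inl by (simp add: matrix_vector_mult_diff_rdistrib colB)
        then show ?thesis using sW by (simp add: subspace_0)
      next
        case (Inr b)
        then show ?thesis unfolding W_def scalar_mult_eq_scaleR by (intro span_mul span_base) auto
      qed
    qed
    finally show ?thesis .
  qed
  have "gmres_exact_within B (matrix_inv M *v btilde A1 b1 b2) x0 (Suc (CARD('n) + CARD('q)))"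
    by (rule gmres_gen[OF iB sW dW BW])
  thus "gmres_exact_within (matrix_inv M ** calA A1 A2) (matrix_inv M *v btilde A1 b1 b2) x0
                  (CARD('n) + CARD('q) + 1)" unfolding B_def by simp
qed

end
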